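(* Consider a run of Algorithm 1 (described in the context) on the one-dimensional corrupted problem with absolute loss. For any interval $I_j$ appearing in the partition during the run: if $I_j$ is marked dubious, then $I_j$ is bisected after $O(\log T)$ queries on $I_j$; if $I_j$ is not marked dubious, then $I_j$ is bisected after $O(1)$ queries on $I_j$. Here a query on $I_j$ is a round in which $I_j$ is the partition interval containing the context, and the constants in $O(\cdot)$ are absolute.
   Context: Problem. Fix $L>0$ and $T\ge 2$. An adversary fixes an unknown $L$-Lipschitz $f:[0,1]\to[0,L]$. In each round $t=1,\dots,T$: the adversary chooses $x_t\in[0,1]$; the learner observes $x_t$ and guesses $q_t$; the adversary observes $q_t$ and sends $\sigma_t\in\{0,1\}$, equal to $\sigma(q_t-f(x_t))$ in uncorrupted rounds and $1-\sigma(q_t-f(x_t))$ in corrupted rounds, where $\sigma(u)=1$ if $u>0$ and $0$ if $u\le 0$; the adversary chooses adaptively which rounds to corrupt, at most $C$ in total ($C$ unknown to the learner). $\mathtt{len}(I)$ is the length of an interval $I$. $\mathtt{MidpointQuery}(I,Y)$, $Y=[a,b]$: guess $q=(a+b)/2$; if $\sigma_t=1$ return $Y\cap[0,q+L\,\mathtt{len}(I)]$, if $\sigma_t=0$ return $Y\cap[q-L\,\mathtt{len}(I),L]$. Algorithm 1. Maintain a partition of $[0,1]$ into intervals; each $I_j$ carries a checking interval $S_j$, range $Y_j$, and a "dubious" flag (initially unset). Initially: $8$ intervals of length $1/8$, each with $S_j=Y_j=[0,L]$. In round $t$, with $I_j$ the partition interval containing $x_t$: (i) if some endpoint of $S_j$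 has not been guessed in a round whose context lay in $I_j$, guess such an endpoint; if the guess was $\min(S_j)$ with $\sigma_t=1$ or $\max(S_j)$ with $\sigma_t=0$, mark $I_j$ dubious; once both endpoints have been queried, set $Y_j=[0,L]$ if dubious and otherwise $Y_j=[\min(S_j)-L\,\mathtt{len}(I_j),\max(S_j)+L\,\mathtt{len}(I_j)]\cap[0,L]$. (ii) Otherwise set $Y_j:=\mathtt{MidpointQuery}(I_j,Y_j)$; if then $\mathtt{len}(Y_j)<\max(4L\,\mathtt{len}(I_j),4L/T)$, bisect $I_j$ into its two halves, which replace it, each with checking interval equal to the current $Y_j$ (endpoints unqueried, not dubious). *)

theory Defs
  imports "HOL-Analysis.Analysis"
begin

text \<open>Model of Algorithm 1 (one-dimensional corrupted contextual search).
  Intervals are pairs (lo, hi) standing for the closed interval [lo, hi].\<close>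

record cell =
  iv  :: "real \<times> real"
  chk :: "real \<times> real"
  rng :: "real \<times> real"
  dub :: bool
  qlo :: bool             \<comment> \<open>min(S_j) already guessed in a round with context in I_j\<close>
  qhi :: bool             \<comment> \<open>max(S_j) already guessed in a round with context in I_j\<close>

definition len :: "real \<times> real \<Rightarrow> real" where
  "len I = snd I - fst I"

definition sig :: "real \<Rightarrow> bool" where
  "sig u = (u > 0)"

definition midpoint_query :: "real \<Rightarrow> real \<times> real \<Rightarrow> real \<times> real \<Rightarrow> bool \<Rightarrow> real \<times> real" where
  "midpoint_query L I Y s =
     (let q = (fst Y + snd Y) / 2 in
      if s then (max (fst Y) 0, min (snd Y) (q + L * len I))
      else (max (fst Y) (q - L * len I), min (snd Y) L))"

definition in_cell :: "real \<Rightarrow> cell \<Rightarrow> bool" where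
  "in_cell x c = (fst (iv c) \<le> x \<and> (x < snd (iv c) \<or> (x = snd (iv c) \<and> snd (iv c) = 1)))"

definition guess :: "cell \<Rightarrow> real" where
  "guess c = (if \<not> qlo c then fst (chk c)
              else if \<not> qhi c then snd (chk c)
              else (fst (rng c) + snd (rng c)) / 2)"

definition fresh_cell :: "real \<times> real \<Rightarrow> real \<times> real \<Rightarrow> cell" where
  "fresh_cell I S = \<lparr>iv = I, chk = S, rng = S, dub = False, qlo = False, qhi = False\<rparr>"

definition update :: "real \<Rightarrow> nat \<Rightarrow> cell \<Rightarrow> bool \<Rightarrow> cell list" where
  "update L T c s =
    (if \<not> (qlo c \<and> qhi c) then
       (let q = guess c;
            lo' = (qlo c \<or> q = fst (chk c));
            hi' = (qhi c \<or> q = snd (chk c));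
            d' = (dub c \<or> (q = fst (chk c) \<and> s) \<or> (q = snd (chk c) \<and> \<not> s));
            Y' = (if lo' \<and> hi' then
                    (if d' then (0, L)
                     else (max (fst (chk c) - L * len (iv c)) 0,
                           min (snd (chk c) + L * len (iv c)) L))
                  else rng c)
        in [c\<lparr>dub := d', qlo := lo', qhi := hi', rng := Y'\<rparr>])
     else
       (let Y' = midpoint_query L (iv c) (rng c) s;
            a = fst (iv c); b = snd (iv c); m = (a + b) / 2
        in if len Y' < max (4 * L * len (iv c)) (4 * L / real T)
           then [fresh_cell (a, m) Y', fresh_cell (m, b) Y']
           else [c\<lparr>rng := Y'\<rparr>]))"

definition init_part :: "real \<Rightarrow> cell list" where
  "init_part L = map (\<lambda>k. fresh_cell (real k / 8, real (k + 1) / 8) (0, L)) [0..<8]"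

text \<open>A round record: (context x_t, guess q_t, feedback sigma_t, corrupted?, queried interval).\<close>
type_synonym round_rec = "real \<times> real \<times> bool \<times> bool \<times> (real \<times> real)"

definition public_hist :: "round_rec list \<Rightarrow> (real \<times> real \<times> bool) list" where
  "public_hist rs = map (\<lambda>(x, q, s, _, _). (x, q, s)) rs"

text \<open>The adaptive adversary: AX chooses the context from the history of contexts,
  guesses and feedbacks; AC decides whether to corrupt the current round, after
  seeing the history, the current context and the current guess.\<close>
fun run :: "real \<Rightarrow> nat \<Rightarrow> (real \<Rightarrow> real) \<Rightarrow> ((real \<times> real \<times> bool) list \<Rightarrow> real)
             \<Rightarrow> ((real \<times> real \<times> bool) list \<Rightarrow> real \<Rightarrow> real \<Rightarrow> bool)
             \<Rightarrow> nat \<Rightarrow> cell list \<times> round_rec list" where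
  "run L T f AX AC 0 = (init_part L, [])"
| "run L T f AX AC (Suc t) =
     (let (P, rs) = run L T f AX AC t;
          h = public_hist rs;
          x = AX h
      in case find (in_cell x) P of
           None \<Rightarrow> (P, rs)
         | Some c \<Rightarrow>
             (let q = guess c;
                  cor = AC h x q;
                  s = (if cor then \<not> sig (q - f x) else sig (q - f x))
              in (concat (map (\<lambda>c'. if c' = c then update L T c s else [c']) P),
                  rs @ [(x, q, s, cor, iv c)])))"

definition num_corrupted :: "round_rec list \<Rightarrow> nat" where
  "num_corrupted rs = length (filter (\<lambda>(_, _, _, cor, _). cor) rs)"

definition num_queries :: "round_rec list \<Rightarrow> real \<times> real \<Rightarrow> nat" where
  "num_queries rs I = length (filter (\<lambda>(_, _, _, _, J). J = I) rs)"

definition appears :: "real \<Rightarrow> nat \<Rightarrow> (real \<Rightarrow> real) \<Rightarrow> ((real \<times> real \<times> bool) list \<Rightarrow> real)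
             \<Rightarrow> ((real \<times> real \<times> bool) list \<Rightarrow> real \<Rightarrow> real \<Rightarrow> bool) \<Rightarrow> real \<times> real \<Rightarrow> bool" where
  "appears L T f AX AC I = (\<exists>t\<le>T. \<exists>c\<in>set (fst (run L T f AX AC t)). iv c = I)"

definition marked_dubious :: "real \<Rightarrow> nat \<Rightarrow> (real \<Rightarrow> real) \<Rightarrow> ((real \<times> real \<times> bool) list \<Rightarrow> real)
             \<Rightarrow> ((real \<times> real \<times> bool) list \<Rightarrow> real \<Rightarrow> real \<Rightarrow> bool) \<Rightarrow> real \<times> real \<Rightarrow> bool" where
  "marked_dubious L T f AX AC I = (\<exists>t\<le>T. \<exists>c\<in>set (fst (run L T f AX AC t)). iv c = I \<and> dub c)"

end

theory Submission
  imports Defs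
begin


definition thr :: "real \<Rightarrow> nat \<Rightarrow> real \<Rightarrow> real" where "thr L T l = max (4*L*l) (4*L/real T)"
definition BS :: "real \<Rightarrow> nat \<Rightarrow> real \<Rightarrow> real" where "BS L T l = max (8*L*l) (4*L/real T)"

lemma core:
  fixes L l y A Tr :: real and k :: nat
  assumes L: "L > 0" and l: "l > 0" and Tr: "Tr > 0" and k: "0 < k"
    and y1: "max (4*L*l) (4*L/Tr) \<le> y" and y2: "y \<le> A / 2^k + 2*L*l"
  shows "2^k * (2*L*max l (1/Tr)) \<le> A"
proof -
  define M where "M = max l (1/Tr)"
  have e: "max (4*L*l) (4*L/Tr) = 4*L*M" unfolding M_def using L
    using max_mult_distrib_left[of "4*L" l "1/Tr"] by simp
  have "2*L*l \<le> 2*L*M" unfolding M_def using L by simp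
  hence "2*L*M \<le> A / 2^k" using e y1 y2 by linarith
  thus ?thesis by (simp add: field_simps M_def)
qed

lemma core_dub:
  fixes L l y Tr :: real and k :: nat
  assumes L: "L > 0" and l: "l > 0" and Tr: "Tr > 0" and k: "0 < k"
    and y1: "max (4*L*l) (4*L/Tr) \<le> y" and y2: "y \<le> L / 2^k + 2*L*l"
  shows "2^k * 2 \<le> Tr"
proof -
  have h: "2^k * (2*L*max l (1/Tr)) \<le> L" by (rule core[OF L l Tr k y1 y2])
  have "2^k * (2*L*(1/Tr)) \<le> 2^k * (2*L*max l (1/Tr))" using L by (intro mult_left_mono) auto
  with h have "2^k * (2*L*(1/Tr)) \<le> L" by linarith
  hence "2^k * 2 * L \<le> L * Tr" using Tr by (simp add: field_simps)
  thus ?thesis using L by (simp add: mult.commute)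
qed

lemma core_nd:
  fixes L l y Tr :: real and k :: nat
  assumes L: "L > 0" and l: "l > 0" and Tr: "Tr > 0" and k: "0 < k"
    and y1: "max (4*L*l) (4*L/Tr) \<le> y" and y2: "y \<le> (max (8*L*l) (4*L/Tr) + 2*L*l) / 2^k + 2*L*l"
  shows "k \<le> 2"
proof -
  define M where "M = max l (1/Tr)"
  have h: "2^k * (2*L*M) \<le> max (8*L*l) (4*L/Tr) + 2*L*l" unfolding M_def by (rule core[OF L l Tr k y1 y2])
  have a: "max (8*L*l) (4*L/Tr) \<le> 8*L*M"
  proof -
    have 1: "8*L*l \<le> 8*L*M" unfolding M_def using L by (intro mult_left_mono) auto
    have "4*L*(1/Tr) \<le> 4*L*M" unfolding M_def using L by (intro mult_left_mono) auto
    hence 2: "4*L/Tr \<le> 4*L*M" by simp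
    have 3: "0 \<le> 4*L*M" unfolding M_def using L l by auto
    show ?thesis using 1 2 3 by linarith
  qed
  have b: "2*L*l \<le> 2*L*M" unfolding M_def using L by simp
  have Mp: "M > 0" unfolding M_def using l by simp
  have "2^k * (2*L*M) \<le> 5 * (2*L*M)" using h a b by linarith
  hence k5: "(2::real)^k \<le> 5" using L Mp by simp
  show ?thesis
  proof (rule ccontr)
    assume "\<not> k \<le> 2"
    hence "(2::real)^3 \<le> 2^k" by (intro power_increasing) auto
    thus False using k5 by simp
  qed
qed

lemma ln2_ge: "ln (2::real) \<ge> 1/2"
proof -
  have "ln (1/2::real) \<le> 1/2 - 1" by (rule ln_le_minus_one) simp
  moreover have "ln (1/2::real) = - ln 2" by (simp add: ln_div)
  ultimately show ?thesis by simp
qed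

lemma final_arith:
  fixes n T :: nat
  assumes T: "T \<ge> 2" and h: "(2::nat)^n \<le> 4*T"
  shows "real n \<le> 10 * ln (real T)"
proof -
  have l2: "ln (2::real) \<ge> 1/2" by (rule ln2_ge)
  have lT: "ln (real T) \<ge> ln 2" using T by simp
  have "(2::real)^n \<le> 4 * real T" using h by (metis of_nat_le_iff of_nat_mult of_nat_numeral of_nat_power)
  hence "ln ((2::real)^n) \<le> ln (4 * real T)" using T by simp
  moreover have "ln (4 * real T) = 2 * ln 2 + ln (real T)"
  proof -
    have "ln (4 * real T) = ln 4 + ln (real T)" using T by (simp add: ln_mult)
    moreover have "ln (4::real) = 2 * ln 2" using ln_realpow[of 2 2] by simp
    ultimately show ?thesis by simp
  qed
  ultimately have "real n * ln 2 \<le> 2 * ln 2 + ln (real T)" by (simp add: ln_realpow)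
  hence "(real n - 2) * ln 2 \<le> ln (real T)" by (simp add: algebra_simps)
  show ?thesis
  proof (cases "real n \<le> 2")
    case True thus ?thesis using l2 lT by linarith
  next
    case False
    hence "(real n - 2) * (1/2) \<le> (real n - 2) * ln 2" using l2 by (intro mult_left_mono) auto
    with \<open>(real n - 2) * ln 2 \<le> ln (real T)\<close> have "real n / 2 - 1 \<le> ln (real T)"
      by (simp add: algebra_simps)
    thus ?thesis using l2 lT by linarith
  qed
qed

lemma final5: "T \<ge> (2::nat) \<Longrightarrow> 5 \<le> 10 * ln (real T)"
proof -
  assume T: "T \<ge> 2"
  have "ln (real T) \<ge> ln 2" using T by simp
  thus ?thesis using ln2_ge by linarith
qed

definition Rlt :: "cell \<Rightarrow> cell \<Rightarrow> bool" where "Rlt c d = (snd (iv c) \<le> fst (iv d))"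
definition AA :: "real \<Rightarrow> nat \<Rightarrow> cell \<Rightarrow> real" where
  "AA L T c = (if dub c then L else BS L T (len (iv c)) + 2*L*len (iv c))"
definition cell_ok :: "real \<Rightarrow> nat \<Rightarrow> cell \<Rightarrow> bool" where
  "cell_ok L T c = (fst (iv c) < snd (iv c) \<and> len (chk c) \<le> BS L T (len (iv c)))"
definition nflags :: "cell \<Rightarrow> nat" where "nflags c = of_bool (qlo c) + of_bool (qhi c)"
definition cnt_ok :: "real \<Rightarrow> nat \<Rightarrow> cell \<Rightarrow> nat \<Rightarrow> bool" where
  "cnt_ok L T c n = ((\<not>(qlo c \<and> qhi c) \<longrightarrow> n \<le> nflags c) \<and>
     (qlo c \<and> qhi c \<longrightarrow> (\<exists>k. n \<le> 2 + k \<and> len (rng c) \<le> AA L T c / 2^k + 2*L*len (iv c)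
        \<and> (0 < k \<longrightarrow> thr L T (len (iv c)) \<le> len (rng c)))))"
definition fineI :: "real \<times> real \<Rightarrow> cell list \<Rightarrow> bool" where
  "fineI I P = (\<forall>d\<in>set P. snd (iv d) \<le> fst I \<or> snd I \<le> fst (iv d) \<or>
      (fst I \<le> fst (iv d) \<and> snd (iv d) \<le> snd I \<and> len (iv d) < len I))"
definition FBa :: "nat \<Rightarrow> nat \<Rightarrow> bool \<Rightarrow> bool" where
  "FBa T n w = (n \<le> 5 \<or> ((2::nat)^n \<le> 4*T \<and> w))"
definition INV :: "real \<Rightarrow> nat \<Rightarrow> cell list \<Rightarrow> round_rec list \<Rightarrow> (real \<times> real \<Rightarrow> bool) \<Rightarrow> bool" where
  "INV L T P rs Dw = (sorted_wrt Rlt P \<and> (\<forall>c\<in>set P. cell_ok L T c) \<and>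
     (\<forall>I. (\<forall>c\<in>set P. iv c = I \<longrightarrow> cnt_ok L T c (num_queries rs I)) \<and>
          ((\<forall>c\<in>set P. iv c \<noteq> I) \<longrightarrow> num_queries rs I = 0 \<or>
              (fst I < snd I \<and> fineI I P \<and> FBa T (num_queries rs I) (Dw I)))))"

lemma cnt_bound:
  assumes L: "L > 0" and T: "T \<ge> 2" and ok: "cell_ok L T c" and cn: "cnt_ok L T c n"
  shows "n \<le> 4 \<or> (dub c \<and> (2::nat)^n \<le> 2*T)"
proof (cases "qlo c \<and> qhi c")
  case False
  hence "n \<le> nflags c" using cn unfolding cnt_ok_def by auto
  moreover have "nflags c \<le> 2" unfolding nflags_def by (simp add: of_bool_def)
  ultimately show ?thesis by simp
next
  case True
  then obtain k where n: "n \<le> 2 + k" and y: "len (rng c) \<le> AA L T c / 2^k + 2*L*len (iv c)"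
     and th: "0 < k \<longrightarrow> thr L T (len (iv c)) \<le> len (rng c)"
    using cn unfolding cnt_ok_def by auto
  have l: "len (iv c) > 0" using ok unfolding cell_ok_def len_def by auto
  have Tp: "real T > 0" using T by simp
  show ?thesis
  proof (cases "k = 0")
    case True thus ?thesis using n by simp
  next
    case False
    hence k: "0 < k" by simp
    have y1: "max (4*L*len (iv c)) (4*L/real T) \<le> len (rng c)" using th k unfolding thr_def by simp
    show ?thesis
    proof (cases "dub c")
      case True
      hence "len (rng c) \<le> L / 2^k + 2*L*len (iv c)" using y unfolding AA_def by simp
      hence "2^k * 2 \<le> real T" using core_dub[OF L l Tp k y1] by simp
      hence "(2::nat)^k * 2 \<le> T" by (metis of_nat_le_iff of_nat_mult of_nat_numeral of_nat_power)
      moreover have "(2::nat)^n \<le> 2^(2+k)" using n by (intro power_increasing) auto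
      ultimately show ?thesis using True by (simp add: power_add)
    next
      case False
      hence "len (rng c) \<le> (max (8*L*len (iv c)) (4*L/real T) + 2*L*len (iv c)) / 2^k + 2*L*len (iv c)"
        using y unfolding AA_def BS_def by simp
      hence "k \<le> 2" using core_nd[OF L l Tp k y1] by simp
      thus ?thesis using n by simp
    qed
  qed
qed



lemma sorted_disj: "sorted_wrt Rlt P \<Longrightarrow> c \<in> set P \<Longrightarrow> d \<in> set P \<Longrightarrow> c \<noteq> d \<Longrightarrow>
   snd (iv c) \<le> fst (iv d) \<or> snd (iv d) \<le> fst (iv c)"
  by (induction P) (auto simp: Rlt_def)

lemma sorted_concat:
  assumes "sorted_wrt Rlt P"
    and "\<forall>a\<in>set P. sorted_wrt Rlt (g a) \<and> (\<forall>e\<in>set (g a). fst (iv a) \<le> fst (iv e) \<and> snd (iv e) \<le> snd (iv a))"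
  shows "sorted_wrt Rlt (concat (map g P))"
  using assms
proof (induction P)
  case Nil show ?case by simp
next
  case (Cons a P)
  have IH: "sorted_wrt Rlt (concat (map g P))" using Cons by simp
  have "\<forall>x\<in>set (g a). \<forall>y\<in>set (concat (map g P)). Rlt x y"
  proof (intro ballI)
    fix x y assume x: "x \<in> set (g a)" and y: "y \<in> set (concat (map g P))"
    then obtain b where b: "b \<in> set P" and yb: "y \<in> set (g b)" by auto
    have "Rlt a b" using Cons.prems(1) b by simp
    moreover have "snd (iv x) \<le> snd (iv a)" using Cons.prems(2) x by auto
    moreover have "fst (iv b) \<le> fst (iv y)" using Cons.prems(2) b yb by auto
    ultimately show "Rlt x y" unfolding Rlt_def by linarith
  qed
  thus ?case using IH Cons.prems(2) by (simp add: sorted_wrt_append)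
qed

lemma mid_len: "len (midpoint_query L I Y s) \<le> len Y / 2 + L * len I"
proof -
  define q where "q = (fst Y + snd Y) / 2"
  show ?thesis
  proof (cases s)
    case True
    hence "midpoint_query L I Y s = (max (fst Y) 0, min (snd Y) (q + L * len I))"
      unfolding midpoint_query_def q_def Let_def by simp
    moreover have "min (snd Y) (q + L * len I) \<le> q + L * len I" by simp
    moreover have "fst Y \<le> max (fst Y) 0" by simp
    ultimately have "len (midpoint_query L I Y s) \<le> (q + L * len I) - fst Y" unfolding len_def by simp
    moreover have "(q + L * len I) - fst Y = len Y / 2 + L * len I" unfolding q_def len_def by (simp add: field_simps)
    ultimately show ?thesis by simp
  next
    case False
    hence "midpoint_query L I Y s = (max (fst Y) (q - L * len I), min (snd Y) L)"
      unfolding midpoint_query_def q_def Let_def by simp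
    moreover have "min (snd Y) L \<le> snd Y" by simp
    moreover have "q - L * len I \<le> max (fst Y) (q - L * len I)" by simp
    ultimately have "len (midpoint_query L I Y s) \<le> snd Y - (q - L * len I)" unfolding len_def by simp
    moreover have "snd Y - (q - L * len I) = len Y / 2 + L * len I" unfolding q_def len_def by (simp add: field_simps)
    ultimately show ?thesis by simp
  qed
qed

lemma len_clip: "len (max (a - r) 0, min (b + r) L) \<le> (b - a) + 2*r"
proof -
  have "min (b + r) L \<le> b + r" by simp
  moreover have "a - r \<le> max (a - r) 0" by simp
  ultimately show ?thesis unfolding len_def by simp
qed

lemma upd_check:
  assumes nq: "\<not>(qlo c \<and> qhi c)" and ok: "cell_ok L T c" and L: "L > 0"
  shows "\<exists>c'. update L T c s = [c'] \<and> iv c' = iv c \<and> chk c' = chk c \<and> nflags c < nflags c'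
     \<and> (dub c \<longrightarrow> dub c') \<and> (qlo c' \<and> qhi c' \<longrightarrow> len (rng c') \<le> AA L T c' + 2*L*len (iv c'))"
proof -
  define q where "q = guess c"
  define lo' where "lo' = (qlo c \<or> q = fst (chk c))"
  define hi' where "hi' = (qhi c \<or> q = snd (chk c))"
  define d' where "d' = (dub c \<or> (q = fst (chk c) \<and> s) \<or> (q = snd (chk c) \<and> \<not> s))"
  define Y' where "Y' = (if lo' \<and> hi' then
                    (if d' then (0, L)
                     else (max (fst (chk c) - L * len (iv c)) 0,
                           min (snd (chk c) + L * len (iv c)) L))
                  else rng c)"
  define c' where "c' = c\<lparr>dub := d', qlo := lo', qhi := hi', rng := Y'\<rparr>"
  have u: "update L T c s = [c']"
    unfolding update_def Let_def c'_def Y'_def d'_def hi'_def lo'_def q_def using nq by simp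
  have lp: "len (iv c) > 0" using ok unfolding cell_ok_def len_def by simp
  have nf: "nflags c < nflags c'"
  proof (cases "qlo c")
    case False
    hence "q = fst (chk c)" unfolding q_def guess_def by simp
    hence "lo'" unfolding lo'_def by simp
    thus ?thesis using False unfolding nflags_def c'_def hi'_def by (simp add: of_bool_def)
  next
    case True
    hence "\<not> qhi c" using nq by simp
    hence "q = snd (chk c)" using True unfolding q_def guess_def by simp
    hence "hi'" unfolding hi'_def by simp
    thus ?thesis using True \<open>\<not> qhi c\<close> unfolding nflags_def c'_def lo'_def by (simp add: of_bool_def)
  qed
  have ab: "len (rng c') \<le> AA L T c' + 2*L*len (iv c')" if "qlo c' \<and> qhi c'"
  proof -
    have lh: "lo' \<and> hi'" using that unfolding c'_def by simp
    show ?thesis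
    proof (cases d')
      case True
      hence "rng c' = (0, L)" "AA L T c' = L" using lh unfolding c'_def Y'_def AA_def by simp_all
      moreover have "0 \<le> 2*L*len (iv c')" using L lp unfolding c'_def by simp
      ultimately show ?thesis unfolding len_def by simp
    next
      case False
      hence r: "rng c' = (max (fst (chk c) - L * len (iv c)) 0, min (snd (chk c) + L * len (iv c)) L)"
        and a: "AA L T c' = BS L T (len (iv c)) + 2*L*len (iv c)"
        using lh unfolding c'_def Y'_def AA_def by simp_all
      have "len (rng c') \<le> (snd (chk c) - fst (chk c)) + 2 * (L * len (iv c))"
        unfolding r by (rule len_clip)
      moreover have "snd (chk c) - fst (chk c) \<le> BS L T (len (iv c))"
        using ok unfolding cell_ok_def len_def by simp
      moreover have "0 \<le> 2*L*len (iv c')" using L lp unfolding c'_def by simp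
      ultimately show ?thesis using a unfolding c'_def by simp
    qed
  qed
  show ?thesis
    apply (rule exI[of _ c'])
    using u nf ab unfolding c'_def d'_def by auto
qed

lemma upd_mid:
  assumes "qlo c \<and> qhi c"
  shows "update L T c s = (if len (midpoint_query L (iv c) (rng c) s) < thr L T (len (iv c))
     then [fresh_cell (fst (iv c), (fst (iv c) + snd (iv c))/2) (midpoint_query L (iv c) (rng c) s),
           fresh_cell ((fst (iv c) + snd (iv c))/2, snd (iv c)) (midpoint_query L (iv c) (rng c) s)]
     else [c\<lparr>rng := midpoint_query L (iv c) (rng c) s\<rparr>])"
  using assms unfolding update_def thr_def Let_def by simp

lemma upd_props:
  assumes ok: "cell_ok L T c" and L: "L > 0" and e: "e \<in> set (update L T c s)"
  shows "cell_ok L T e \<and> (iv e = iv c \<or> (fst (iv c) \<le> fst (iv e) \<and> snd (iv e) \<le> snd (iv c)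
     \<and> len (iv e) < len (iv c) \<and> \<not> qlo e \<and> \<not> qhi e \<and> (fst (iv e) = fst (iv c) \<or> snd (iv e) = snd (iv c))))"
proof (cases "qlo c \<and> qhi c")
  case False
  then obtain c' where "update L T c s = [c']" "iv c' = iv c" "chk c' = chk c"
    using upd_check[OF False ok L] by blast
  thus ?thesis using e ok unfolding cell_ok_def by auto
next
  case True
  define Y where "Y = midpoint_query L (iv c) (rng c) s"
  define a where "a = fst (iv c)"
  define b where "b = snd (iv c)"
  have ab: "a < b" using ok unfolding cell_ok_def a_def b_def by simp
  show ?thesis
  proof (cases "len Y < thr L T (len (iv c))")
    case False
    hence "update L T c s = [c\<lparr>rng := Y\<rparr>]" using upd_mid[OF True] unfolding Y_def by simp
    thus ?thesis using e ok unfolding cell_ok_def by auto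
  next
    case lt: True
    hence u: "update L T c s = [fresh_cell (a, (a+b)/2) Y, fresh_cell ((a+b)/2, b) Y]"
      using upd_mid[OF True] unfolding Y_def a_def b_def by simp
    have li: "len (iv c) = b - a" unfolding len_def a_def b_def by simp
    have bs: "BS L T ((b - a)/2) = thr L T (len (iv c))" unfolding BS_def thr_def li by simp
    have h1: "len (a, (a+b)/2) = (b-a)/2" "len ((a+b)/2, b) = (b-a)/2" unfolding len_def by (simp_all add: field_simps)
    have lY: "len Y \<le> BS L T ((b - a)/2)" using lt bs by simp
    have ia: "fst (iv c) = a" "snd (iv c) = b" unfolding a_def b_def by simp_all
    from e u have "e = fresh_cell (a,(a+b)/2) Y \<or> e = fresh_cell ((a+b)/2,b) Y" by simp
    thus ?thesis
    proof
      assume ee: "e = fresh_cell (a,(a+b)/2) Y"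
      have ie: "iv e = (a,(a+b)/2)" and "chk e = Y" "\<not> qlo e" "\<not> qhi e" unfolding ee fresh_cell_def by simp_all
      have le: "len (iv e) = (b-a)/2" using ie h1 by simp
      show ?thesis unfolding cell_ok_def le li ia using lY ab ie \<open>chk e = Y\<close> \<open>\<not> qlo e\<close> \<open>\<not> qhi e\<close> by simp
    next
      assume ee: "e = fresh_cell ((a+b)/2,b) Y"
      have ie: "iv e = ((a+b)/2,b)" and "chk e = Y" "\<not> qlo e" "\<not> qhi e" unfolding ee fresh_cell_def by simp_all
      have le: "len (iv e) = (b-a)/2" using ie h1 by simp
      show ?thesis unfolding cell_ok_def le li ia using lY ab ie \<open>chk e = Y\<close> \<open>\<not> qlo e\<close> \<open>\<not> qhi e\<close> by simp
    qed
  qed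
qed

lemma upd_sorted:
  assumes ok: "cell_ok L T c"
  shows "sorted_wrt Rlt (update L T c s)"
proof (cases "qlo c \<and> qhi c")
  case False
  thus ?thesis unfolding update_def Let_def by simp
next
  case True
  thus ?thesis unfolding upd_mid[OF True] by (simp add: Rlt_def fresh_cell_def)
qed



lemma INV_mono:
  assumes "INV L T P rs Dw" and "\<And>I. Dw I \<Longrightarrow> Dw' I"
  shows "INV L T P rs Dw'"
  using assms unfolding INV_def FBa_def by blast

lemma step:
  assumes inv: "INV L T P rs Dw" and cP: "c \<in> set P" and L: "L > 0" and T: "T \<ge> 2"
    and DwM: "\<And>I. Dw I \<Longrightarrow> Dw' I" and Dwc: "\<And>d. d \<in> set P \<Longrightarrow> dub d \<Longrightarrow> Dw' (iv d)"
  shows "INV L T (concat (map (\<lambda>c'. if c' = c then update L T c s else [c']) P))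
           (rs @ [(x,q,s,cor,iv c)]) Dw'"
proof -
  define P' where "P' = concat (map (\<lambda>c'. if c' = c then update L T c s else [c']) P)"
  define rs' where "rs' = rs @ [(x,q,s,cor,iv c)]"
  have srt: "sorted_wrt Rlt P" using inv unfolding INV_def by blast
  have oks: "\<And>d. d \<in> set P \<Longrightarrow> cell_ok L T d" using inv unfolding INV_def by blast
  have cnts: "\<And>d I. d \<in> set P \<Longrightarrow> iv d = I \<Longrightarrow> cnt_ok L T d (num_queries rs I)"
    using inv unfolding INV_def by blast
  have absI: "\<And>I. (\<forall>d\<in>set P. iv d \<noteq> I) \<Longrightarrow> num_queries rs I = 0 \<or>
                 (fst I < snd I \<and> fineI I P \<and> FBa T (num_queries rs I) (Dw I))"
  proof -
    fix I assume "\<forall>d\<in>set P. iv d \<noteq> I"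
    moreover have "(\<forall>c\<in>set P. iv c \<noteq> I) \<longrightarrow> num_queries rs I = 0 \<or>
              (fst I < snd I \<and> fineI I P \<and> FBa T (num_queries rs I) (Dw I))"
      using inv unfolding INV_def by blast
    ultimately show "num_queries rs I = 0 \<or> (fst I < snd I \<and> fineI I P \<and> FBa T (num_queries rs I) (Dw I))"
      by blast
  qed
  have okc: "cell_ok L T c" using oks cP .
  have mem: "\<And>e. e \<in> set P' \<longleftrightarrow> (e \<in> set P \<and> e \<noteq> c) \<or> e \<in> set (update L T c s)"
    unfolding P'_def using cP by auto
  have nq: "\<And>I. num_queries rs' I = num_queries rs I + (if iv c = I then 1 else 0)"
    unfolding rs'_def num_queries_def by simp
  have pos: "\<And>d. d \<in> set P \<Longrightarrow> fst (iv d) < snd (iv d)" using oks unfolding cell_ok_def by blast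
  have disj: "\<And>d. d \<in> set P \<Longrightarrow> d \<noteq> c \<Longrightarrow> snd (iv d) \<le> fst (iv c) \<or> snd (iv c) \<le> fst (iv d)"
    using sorted_disj[OF srt] cP by blast
  have uniq: "\<And>d. d \<in> set P \<Longrightarrow> iv d = iv c \<Longrightarrow> d = c"
  proof (rule ccontr)
    fix d assume d: "d \<in> set P" "iv d = iv c" "d \<noteq> c"
    show False using disj[OF d(1) d(3)] pos[OF d(1)] d(2) by simp
  qed
  have up: "\<And>e. e \<in> set (update L T c s) \<Longrightarrow> cell_ok L T e \<and> (iv e = iv c \<or> (fst (iv c) \<le> fst (iv e) \<and> snd (iv e) \<le> snd (iv c)
     \<and> len (iv e) < len (iv c) \<and> \<not> qlo e \<and> \<not> qhi e \<and> (fst (iv e) = fst (iv c) \<or> snd (iv e) = snd (iv c))))"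
    using upd_props[OF okc L] by blast
  have posc: "fst (iv c) < snd (iv c)" using okc unfolding cell_ok_def by simp
  have S: "sorted_wrt Rlt P'"
    unfolding P'_def
  proof (rule sorted_concat[OF srt], rule ballI, rule conjI)
    fix a assume a: "a \<in> set P"
    show "sorted_wrt Rlt (if a = c then update L T c s else [a])"
      using upd_sorted[OF okc] by simp
    show "\<forall>e\<in>set (if a = c then update L T c s else [a]). fst (iv a) \<le> fst (iv e) \<and> snd (iv e) \<le> snd (iv a)"
    proof (cases "a = c")
      case True
      thus ?thesis using up by fastforce
    qed simp
  qed
  have OK: "\<forall>e\<in>set P'. cell_ok L T e" using mem oks up by blast
  have newzero: "num_queries rs (iv e) = 0" if e: "e \<in> set (update L T c s)" and ne: "iv e \<noteq> iv c" for e
  proof -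
    have pe: "fst (iv e) < snd (iv e)" using up[OF e] unfolding cell_ok_def by simp
    have sub: "fst (iv c) \<le> fst (iv e)" "snd (iv e) \<le> snd (iv c)" "len (iv e) < len (iv c)"
      using up[OF e] ne by auto
    show ?thesis
    proof (cases "\<exists>d\<in>set P. iv d = iv e")
      case True
      then obtain d where d: "d \<in> set P" "iv d = iv e" by blast
      have "d \<noteq> c" using d ne by auto
      from disj[OF d(1) this] show ?thesis using d pe sub by auto
    next
      case False
      hence "num_queries rs (iv e) = 0 \<or> fineI (iv e) P" using absI[of "iv e"] by auto
      moreover have "\<not> fineI (iv e) P"
      proof
        assume "fineI (iv e) P"
        hence "snd (iv c) \<le> fst (iv e) \<or> snd (iv e) \<le> fst (iv c) \<or>
               (fst (iv e) \<le> fst (iv c) \<and> snd (iv c) \<le> snd (iv e) \<and> len (iv c) < len (iv e))"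
          using cP unfolding fineI_def by blast
        thus False using sub pe by auto
      qed
      ultimately show ?thesis by blast
    qed
  qed
  have A: "cnt_ok L T e (num_queries rs' I)" if e: "e \<in> set P'" and eI: "iv e = I" for e I
  proof (cases "e \<in> set P \<and> e \<noteq> c")
    case True
    hence "iv c \<noteq> I" using uniq eI by auto
    thus ?thesis using nq cnts True eI by simp
  next
    case False
    hence eu: "e \<in> set (update L T c s)" using mem e by blast
    show ?thesis
    proof (cases "iv e = iv c")
      case False
      hence z: "num_queries rs' I = 0" using nq newzero[OF eu False] eI by simp
      have "\<not> qlo e" using up[OF eu] False by blast
      thus ?thesis unfolding z cnt_ok_def by simp
    next
      case True
      define n where "n = num_queries rs (iv c)"
      have n': "num_queries rs' I = n + 1" using nq True eI n_def by simp
      have cc: "cnt_ok L T c n" using cnts[OF cP] n_def by simp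
      have lp: "len (iv c) > 0" using posc unfolding len_def by simp
      show ?thesis
      proof (cases "qlo c \<and> qhi c")
        case False
        then obtain c' where u: "update L T c s = [c']" and c'1: "iv c' = iv c" and c'2: "nflags c < nflags c'"
          and c'3: "qlo c' \<and> qhi c' \<longrightarrow> len (rng c') \<le> AA L T c' + 2*L*len (iv c')"
          using upd_check[OF False okc L] by blast
        have ec: "e = c'" using eu u by simp
        have "n \<le> nflags c" using cc False unfolding cnt_ok_def by simp
        moreover have "nflags c' \<le> 2" unfolding nflags_def by (simp add: of_bool_def)
        ultimately have nn: "n + 1 \<le> nflags c'" "n + 1 \<le> 2" using c'2 by simp_all
        show ?thesis unfolding n' ec cnt_ok_def
        proof (intro conjI impI)
          show "n + 1 \<le> nflags c'" by (rule nn(1))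
        next
          assume h: "qlo c' \<and> qhi c'"
          show "\<exists>k. n + 1 \<le> 2 + k \<and> len (rng c') \<le> AA L T c' / 2 ^ k + 2 * L * len (iv c') \<and>
             (0 < k \<longrightarrow> thr L T (len (iv c')) \<le> len (rng c'))"
            apply (rule exI[of _ 0]) using nn c'3 h by simp
        qed
      next
        case both: True
        define Y where "Y = midpoint_query L (iv c) (rng c) s"
        show ?thesis
        proof (cases "len Y < thr L T (len (iv c))")
          case lt: True
          hence "update L T c s = [fresh_cell (fst (iv c), (fst (iv c) + snd (iv c))/2) Y,
                   fresh_cell ((fst (iv c) + snd (iv c))/2, snd (iv c)) Y]"
            using upd_mid[OF both] unfolding Y_def by simp
          moreover have h1: "(fst (iv c), (fst (iv c) + snd (iv c))/2) \<noteq> iv c" using posc by (simp add: prod_eq_iff)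
          moreover have h2: "((fst (iv c) + snd (iv c))/2, snd (iv c)) \<noteq> iv c" using posc by (simp add: prod_eq_iff)
          ultimately have "iv e \<noteq> iv c" using eu unfolding fresh_cell_def by auto
          thus ?thesis using True by simp
        next
          case nlt: False
          hence "update L T c s = [c\<lparr>rng := Y\<rparr>]" using upd_mid[OF both] unfolding Y_def by simp
          hence ec: "e = c\<lparr>rng := Y\<rparr>" using eu by simp
          obtain k where k1: "n \<le> 2 + k" and k2: "len (rng c) \<le> AA L T c / 2^k + 2*L*len (iv c)"
            using cc both unfolding cnt_ok_def by blast
          have aa: "AA L T e = AA L T c" unfolding ec AA_def by simp
          have "len Y \<le> len (rng c) / 2 + L * len (iv c)" unfolding Y_def by (rule mid_len)
          also have "\<dots> \<le> (AA L T c / 2^k + 2*L*len (iv c)) / 2 + L * len (iv c)" using k2 by simp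
          also have "\<dots> = AA L T c / 2^(Suc k) + 2*L*len (iv c)" by (simp add: field_simps)
          finally have "len Y \<le> AA L T c / 2^(Suc k) + 2*L*len (iv c)" .
          moreover have "thr L T (len (iv c)) \<le> len Y" using nlt by simp
          moreover have "n + 1 \<le> 2 + Suc k" using k1 by simp
          ultimately show ?thesis unfolding n' cnt_ok_def using both aa unfolding ec
            by (intro conjI impI; (rule exI[of _ "Suc k"])?) auto
        qed
      qed
    qed
  qed
  have B: "num_queries rs' I = 0 \<or> (fst I < snd I \<and> fineI I P' \<and> FBa T (num_queries rs' I) (Dw' I))"
    if nI: "\<forall>e\<in>set P'. iv e \<noteq> I" for I
  proof (cases "iv c = I")
    case True
    define n where "n = num_queries rs (iv c)"
    have n': "num_queries rs' I = n + 1" using nq True n_def by simp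
    have F: "fineI I P'" unfolding fineI_def
    proof
      fix e assume e: "e \<in> set P'"
      show "snd (iv e) \<le> fst I \<or> snd I \<le> fst (iv e) \<or> (fst I \<le> fst (iv e) \<and> snd (iv e) \<le> snd I \<and> len (iv e) < len I)"
      proof (cases "e \<in> set P \<and> e \<noteq> c")
        case True thus ?thesis using disj True \<open>iv c = I\<close> by auto
      next
        case False
        hence eu: "e \<in> set (update L T c s)" using mem e by blast
        have "iv e \<noteq> iv c" using nI e True by auto
        thus ?thesis using up[OF eu] True by auto
      qed
    qed
    have cb: "n \<le> 4 \<or> (dub c \<and> (2::nat)^n \<le> 2*T)" using cnt_bound[OF L T okc] cnts[OF cP] n_def by simp
    have "FBa T (n+1) (Dw' I)"
      using cb Dwc[OF cP] True unfolding FBa_def by auto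
    thus ?thesis using F posc True n' by simp
  next
    case False
    have n': "num_queries rs' I = num_queries rs I" using nq False by simp
    have "\<forall>d\<in>set P. iv d \<noteq> I"
    proof
      fix d assume d: "d \<in> set P"
      show "iv d \<noteq> I"
      proof
        assume "iv d = I"
        hence "d \<noteq> c" using False by auto
        hence "d \<in> set P'" using mem d by blast
        thus False using nI \<open>iv d = I\<close> by blast
      qed
    qed
    from absI[OF this] show ?thesis
    proof
      assume "num_queries rs I = 0" thus ?thesis using n' by simp
    next
      assume h: "fst I < snd I \<and> fineI I P \<and> FBa T (num_queries rs I) (Dw I)"
      have F: "fineI I P'" unfolding fineI_def
      proof
        fix e assume e: "e \<in> set P'"
        show "snd (iv e) \<le> fst I \<or> snd I \<le> fst (iv e) \<or> (fst I \<le> fst (iv e) \<and> snd (iv e) \<le> snd I \<and> len (iv e) < len I)"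
        proof (cases "e \<in> set P \<and> e \<noteq> c")
          case True thus ?thesis using h unfolding fineI_def by blast
        next
          case False
          hence eu: "e \<in> set (update L T c s)" using mem e by blast
          have fc: "snd (iv c) \<le> fst I \<or> snd I \<le> fst (iv c) \<or> (fst I \<le> fst (iv c) \<and> snd (iv c) \<le> snd I \<and> len (iv c) < len I)"
            using h cP unfolding fineI_def by blast
          have "iv e = iv c \<or> (fst (iv c) \<le> fst (iv e) \<and> snd (iv e) \<le> snd (iv c) \<and> len (iv e) < len (iv c))"
            using up[OF eu] by blast
          thus ?thesis using fc by auto
        qed
      qed
      have "FBa T (num_queries rs I) (Dw' I)" using h DwM unfolding FBa_def by blast
      thus ?thesis using h F n' by simp
    qed
  qed
  show ?thesis
    unfolding P'_def[symmetric] rs'_def[symmetric] INV_def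
    using S OK A B by blast
qed



lemma init_inv:
  assumes L: "L > 0"
  shows "INV L T (init_part L) [] Dw"
proof -
  have S: "sorted_wrt Rlt (init_part L)"
    unfolding init_part_def sorted_wrt_map
    by (rule sorted_wrt_mono_rel[OF _ sorted_wrt_upt]) (simp add: Rlt_def fresh_cell_def)
  have mem: "\<And>d. d \<in> set (init_part L) \<Longrightarrow> \<exists>k::nat. d = fresh_cell (real k / 8, real (k + 1) / 8) (0, L)"
    unfolding init_part_def by auto
  have OK: "\<forall>d\<in>set (init_part L). cell_ok L T d"
  proof
    fix d assume "d \<in> set (init_part L)"
    then obtain k :: nat where d: "d = fresh_cell (real k / 8, real (k + 1) / 8) (0, L)" using mem by blast
    have li: "len (iv d) = 1/8" unfolding d fresh_cell_def len_def by (simp add: field_simps)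
    have lc: "len (chk d) = L" unfolding d fresh_cell_def len_def by simp
    have "fst (iv d) < snd (iv d)" unfolding d fresh_cell_def by (simp add: field_simps)
    moreover have "len (chk d) \<le> BS L T (len (iv d))" unfolding BS_def li lc by simp
    ultimately show "cell_ok L T d" unfolding cell_ok_def by simp
  qed
  have fr: "\<And>d. d \<in> set (init_part L) \<Longrightarrow> \<not> qlo d"
    using mem unfolding fresh_cell_def by fastforce
  have nq: "\<And>I. num_queries [] I = 0" unfolding num_queries_def by simp
  show ?thesis unfolding INV_def using S OK fr nq by (simp add: cnt_ok_def)
qed

lemma run_inv:
  assumes L: "L > 0" and T: "T \<ge> 2"
  shows "INV L T (fst (run L T f AX AC t)) (snd (run L T f AX AC t))
           (\<lambda>I. \<exists>t'\<le>t. \<exists>d\<in>set (fst (run L T f AX AC t')). iv d = I \<and> dub d)"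
proof (induction t)
  case 0
  show ?case using init_inv[OF L] by simp
next
  case (Suc t)
  obtain P rs where r: "run L T f AX AC t = (P, rs)" by fastforce
  define x where "x = AX (public_hist rs)"
  have IH: "INV L T P rs (\<lambda>I. \<exists>t'\<le>t. \<exists>d\<in>set (fst (run L T f AX AC t')). iv d = I \<and> dub d)"
    using Suc r by simp
  have DwM: "\<And>I. (\<exists>t'\<le>t. \<exists>d\<in>set (fst (run L T f AX AC t')). iv d = I \<and> dub d) \<Longrightarrow>
       (\<exists>t'\<le>Suc t. \<exists>d\<in>set (fst (run L T f AX AC t')). iv d = I \<and> dub d)"
    using le_SucI by blast
  have Dwc: "\<And>d. d \<in> set P \<Longrightarrow> dub d \<Longrightarrow>
       (\<exists>t'\<le>Suc t. \<exists>d'\<in>set (fst (run L T f AX AC t')). iv d' = iv d \<and> dub d')"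
  proof -
    fix d assume "d \<in> set P" "dub d"
    thus "\<exists>t'\<le>Suc t. \<exists>d'\<in>set (fst (run L T f AX AC t')). iv d' = iv d \<and> dub d'"
      using r by (intro exI[of _ t]) auto
  qed
  show ?case
  proof (cases "find (in_cell x) P")
    case None
    hence "run L T f AX AC (Suc t) = (P, rs)" using r unfolding x_def by simp
    thus ?thesis using INV_mono[OF IH DwM] by simp
  next
    case (Some c)
    have cP: "c \<in> set P" using Some by (auto simp: find_Some_iff)
    define q where "q = guess c"
    define cor where "cor = AC (public_hist rs) x q"
    define s where "s = (if cor then \<not> sig (q - f x) else sig (q - f x))"
    have eq: "run L T f AX AC (Suc t) = (concat (map (\<lambda>c'. if c' = c then update L T c s else [c']) P),
               rs @ [(x, q, s, cor, iv c)])"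
      using r Some unfolding x_def q_def cor_def s_def by (simp add: Let_def)
    show ?thesis unfolding eq fst_conv snd_conv
      apply (rule step[OF IH cP L T])
      using DwM Dwc by blast+
  qed
qed

theorem lemma21:
  "\<exists>c1 c2 :: real. \<forall>(L::real) (T::nat) (f::real \<Rightarrow> real) (C::nat) AX AC.
     L > 0 \<longrightarrow> T \<ge> 2 \<longrightarrow>
     L-lipschitz_on {0..1} f \<longrightarrow> (\<forall>x\<in>{0..1}. f x \<in> {0..L}) \<longrightarrow>
     (\<forall>h. AX h \<in> {0..1}) \<longrightarrow>
     num_corrupted (snd (run L T f AX AC T)) \<le> C \<longrightarrow>
     (\<forall>I. appears L T f AX AC I \<longrightarrow>
        (marked_dubious L T f AX AC I \<longrightarrow>
           real (num_queries (snd (run L T f AX AC T)) I) \<le> c1 * ln (real T)) \<and>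
        (\<not> marked_dubious L T f AX AC I \<longrightarrow>
           real (num_queries (snd (run L T f AX AC T)) I) \<le> c2))"
proof (intro exI allI impI conjI)
  fix L :: real and T :: nat and f :: "real \<Rightarrow> real" and AX AC and I :: "real \<times> real"
  assume L: "L > 0" and T: "T \<ge> 2"
  define P where "P = fst (run L T f AX AC T)"
  define n where "n = num_queries (snd (run L T f AX AC T)) I"
  have inv: "INV L T P (snd (run L T f AX AC T)) (marked_dubious L T f AX AC)"
    using run_inv[OF L T, of f AX AC T] unfolding P_def marked_dubious_def by simp
  have key: "n \<le> 5 \<or> ((2::nat)^n \<le> 4*T \<and> marked_dubious L T f AX AC I)"
  proof (cases "\<exists>d\<in>set P. iv d = I")
    case True
    then obtain d where d: "d \<in> set P" "iv d = I" by blast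
    have "\<forall>c\<in>set P. iv c = I \<longrightarrow> cnt_ok L T c n" using inv unfolding INV_def n_def by blast
    hence "cnt_ok L T d n" using d by blast
    moreover have "cell_ok L T d" using inv d unfolding INV_def by blast
    ultimately have "n \<le> 4 \<or> (dub d \<and> (2::nat)^n \<le> 2*T)" using cnt_bound[OF L T] by blast
    moreover have "dub d \<Longrightarrow> marked_dubious L T f AX AC I"
      unfolding marked_dubious_def using d P_def by blast
    ultimately show ?thesis by auto
  next
    case False
    have "(\<forall>c\<in>set P. iv c \<noteq> I) \<longrightarrow> n = 0 \<or> (fst I < snd I \<and> fineI I P \<and> FBa T n (marked_dubious L T f AX AC I))"
      using inv unfolding INV_def n_def by blast
    hence "n = 0 \<or> FBa T n (marked_dubious L T f AX AC I)" using False by blast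
    thus ?thesis unfolding FBa_def by auto
  qed
  show "marked_dubious L T f AX AC I \<Longrightarrow> real n \<le> 10 * ln (real T)"
    using key final5[OF T] final_arith[OF T, of n] by auto
  show "\<not> marked_dubious L T f AX AC I \<Longrightarrow> real n \<le> 5"
    using key by auto
qed

end
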